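(* Let $(\Omega,\mathcal{F},P)$ be a probability space, let $(A_t)_{t\ge0}$ be a random bounded $n\times n$ matrix function of $t$ (measurable in $t$) which converges almost surely, as $t\to\infty$, to a random matrix $A^0$ that is almost surely asymptotically stable. For $t_0\ge 0$ let $\Psi_{t,t_0}=e^{A^0(t-t_0)}$ (so $\frac{d}{dt}\Psi_{t,t_0}=A^0\Psi_{t,t_0}$, $\Psi_{t_0,t_0}=I$), and let $\Phi_{t,t_0}$ satisfy $\frac{d}{dt}\Phi_{t,t_0}=A_t\Phi_{t,t_0}$, $\Phi_{t_0,t_0}=I$. Then $$\lim_{T\to\infty}\frac1T\int_{t_0}^T\lVert\Phi_{t,t_0}-\Psi_{t,t_0}\rVert^2\,dt=0\quad\text{almost surely.}$$
   Context: $\lVert\cdot\rVert$ denotes the matrix 2-norm; a matrix is asymptotically stable if all its eigenvalues have strictly negative real parts. *)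

theory Defs
  imports "HOL-Analysis.Analysis" "HOL-Probability.Probability"
begin

definition mat_norm2 :: "real^'n^'n \<Rightarrow> real" where
  "mat_norm2 A = onorm (\<lambda>x. A *v x)"

fun mat_pow :: "real^'n^'n \<Rightarrow> nat \<Rightarrow> real^'n^'n" where
  "mat_pow A 0 = mat 1"
| "mat_pow A (Suc k) = A ** mat_pow A k"

definition mat_exp :: "real^'n^'n \<Rightarrow> real^'n^'n" where
  "mat_exp A = (\<Sum>k. (1 / fact k) *\<^sub>R mat_pow A k)"

definition cmat :: "real^'n^'n \<Rightarrow> complex^'n^'n" where
  "cmat A = (\<chi> i j. complex_of_real (A $ i $ j))"

definition is_eigenvalue :: "real^'n^'n \<Rightarrow> complex \<Rightarrow> bool" where
  "is_eigenvalue A l \<longleftrightarrow> (\<exists>v. v \<noteq> 0 \<and> cmat A *v v = l *s v)"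

definition asymp_stable :: "real^'n^'n \<Rightarrow> bool" where
  "asymp_stable A \<longleftrightarrow> (\<forall>l. is_eigenvalue A l \<longrightarrow> Re l < 0)"

end

theory Submission
  imports Defs "Jordan_Normal_Form.Schur_Decomposition"
begin

no_notation vec_index (infixl "$" 100)
hide_const (open) Matrix.mat Matrix.vec

lemma norm_vec_le_l1: "norm (x::'a::real_normed_vector^'n) \<le> (\<Sum>i\<in>UNIV. norm (x$i))"
  unfolding norm_vec_def by (rule L2_set_le_sum) auto

definition l1n :: "'a::real_normed_vector^'n^'m \<Rightarrow> real" where
  "l1n M = (\<Sum>i\<in>UNIV. \<Sum>j\<in>UNIV. norm (M$i$j))"

lemma l1n_nonneg: "0 \<le> l1n M"
  unfolding l1n_def by (intro sum_nonneg) auto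

lemma mv_bound:
  fixes M :: "'a::real_normed_field^'n^'m"
  shows "norm (M *v x) \<le> l1n M * norm x"
proof -
  have "norm (M *v x) \<le> (\<Sum>i\<in>UNIV. norm ((M *v x)$i))" by (rule norm_vec_le_l1)
  also have "\<dots> \<le> (\<Sum>i\<in>UNIV. (\<Sum>j\<in>UNIV. norm (M$i$j)) * norm x)"
  proof (rule sum_mono)
    fix i
    have "norm ((M *v x)$i) = norm (\<Sum>j\<in>UNIV. M$i$j * x$j)"
      by (simp add: matrix_vector_mult_def)
    also have "\<dots> \<le> (\<Sum>j\<in>UNIV. norm (M$i$j * x$j))" by (rule norm_sum)
    also have "\<dots> \<le> (\<Sum>j\<in>UNIV. norm (M$i$j) * norm x)"
      by (rule sum_mono) (metis norm_mult mult_left_mono Finite_Cartesian_Product.norm_nth_le norm_ge_zero)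
    finally show "norm ((M *v x)$i) \<le> (\<Sum>j\<in>UNIV. norm (M$i$j)) * norm x"
      by (simp add: sum_distrib_right)
  qed
  finally show ?thesis by (simp add: l1n_def sum_distrib_right)
qed

lemma continuous_l1n: "continuous_on UNIV (l1n :: 'a::real_normed_vector^'n^'m \<Rightarrow> real)"
  unfolding l1n_def by (intro continuous_intros)

lemma tendsto_l1n: "((\<lambda>x. f x) \<longlongrightarrow> (0::'a::real_normed_vector^'n^'m)) F \<Longrightarrow> ((\<lambda>x. l1n (f x)) \<longlongrightarrow> 0) F"
proof -
  assume "(f \<longlongrightarrow> 0) F"
  hence "((\<lambda>x. l1n (f x)) \<longlongrightarrow> l1n (0::'a^'n^'m)) F"
    using continuous_l1n by (metis UNIV_I continuous_on_def isCont_tendsto_compose open_UNIV continuous_on_eq_continuous_at)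
  thus ?thesis by (simp add: l1n_def)
qed


lemma decay:
  fixes z :: "real \<Rightarrow> complex^'n" and N :: "real \<Rightarrow> complex^'n^'n" and B :: "complex^'n^'n"
  assumes alpha: "\<alpha> > 0" and coer: "\<And>w. inner w (B *v w) \<le> - \<alpha> * (norm w)^2"
    and conv: "(N \<longlongrightarrow> B) at_top"
    and eq: "\<And>t. t \<ge> a \<Longrightarrow> ((\<lambda>u. N u *v z u) has_integral (z t - z a)) {a..t}"
  shows "(z \<longlongrightarrow> 0) at_top"
proof -
  define f where "f = (\<lambda>u. N u *v z u)"
  define e0 where "e0 = \<alpha> / 8"
  have e0: "e0 > 0" using alpha by (simp add: e0_def)
  have "((\<lambda>u. N u - B) \<longlongrightarrow> 0) at_top" using conv by (simp add: LIM_zero)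
  hence "((\<lambda>u. l1n (N u - B)) \<longlongrightarrow> 0) at_top" by (rule tendsto_l1n)
  hence "eventually (\<lambda>u. l1n (N u - B) < e0) at_top"
    using e0 by (simp add: order_tendsto_iff)
  then obtain T0 where T0: "\<And>u. u \<ge> T0 \<Longrightarrow> l1n (N u - B) < e0"
    by (auto simp: eventually_at_top_linorder)
  define T1 where "T1 = max T0 a"
  define K where "K = l1n B + e0 + 1"
  have K1: "K \<ge> 1" using l1n_nonneg[of B] e0 by (simp add: K_def)
  have bE: "norm ((N u - B) *v w) \<le> e0 * norm w" if "u \<ge> T1" for u w
  proof -
    have "norm ((N u - B) *v w) \<le> l1n (N u - B) * norm w" by (rule mv_bound)
    also have "\<dots> \<le> e0 * norm w" using T0[of u] that by (intro mult_right_mono) (auto simp: T1_def)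
    finally show ?thesis .
  qed
  have bB: "norm (B *v w) \<le> K * norm w" for w
  proof -
    have "norm (B *v w) \<le> l1n B * norm w" by (rule mv_bound)
    also have "\<dots> \<le> K * norm w" by (intro mult_right_mono) (auto simp: K_def e0 less_imp_le)
    finally show ?thesis .
  qed
  have bN: "norm (N u *v w) \<le> K * norm w" if "u \<ge> T1" for u w
  proof -
    have "N u *v w = B *v w + (N u - B) *v w" by (simp add: matrix_vector_mult_diff_rdistrib)
    hence "norm (N u *v w) \<le> norm (B *v w) + norm ((N u - B) *v w)" by (metis norm_triangle_ineq)
    also have "\<dots> \<le> (l1n B) * norm w + e0 * norm w" using mv_bound[of B w] bE[OF that, of w] by linarith
    also have "\<dots> \<le> K * norm w" by (simp add: K_def algebra_simps)
    finally show ?thesis .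
  qed
  have integ: "f integrable_on {a..t}" if "t \<ge> a" for t
    using eq[OF that] unfolding f_def by blast
  have int_a: "integral {a..t} f = z t - z a" if "t \<ge> a" for t
    using eq[OF that] unfolding f_def by blast
  have eq2: "(f has_integral (z t - z s)) {s..t}" if "a \<le> s" "s \<le> t" for s t
  proof -
    have it: "f integrable_on {a..t}" using that by (intro integ) auto
    have "integral {a..s} f + integral {s..t} f = integral {a..t} f"
      by (rule Henstock_Kurzweil_Integration.integral_combine[OF that it])
    hence "integral {s..t} f = z t - z s" using int_a[of s] int_a[of t] that by (simp add: eq_diff_eq add.commute)
    moreover have "f integrable_on {s..t}"
      using it that by (intro integrable_subinterval_real[OF it]) auto
    ultimately show ?thesis by (metis has_integral_integral)
  qed
  have cont: "continuous_on {s..t} z" if "a \<le> s" for s t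
  proof (cases "s \<le> t")
    case True
    have "continuous_on {a..t} (\<lambda>u. z a + integral {a..u} f)"
      using integ[of t] that True by (intro continuous_intros indefinite_integral_continuous_1) auto
    hence "continuous_on {a..t} z"
      by (rule continuous_on_eq) (simp add: int_a)
    then show ?thesis by (rule continuous_on_subset) (use that in auto)
  next
    case False thus ?thesis by simp
  qed
  define h where "h = min (min (1/(2*K)) (\<alpha>/(16*K^2))) (1/\<alpha>)"
  have hpos: "h > 0" using K1 alpha by (simp add: h_def)
  have h1: "h \<le> 1/(2*K)" and h2: "h \<le> \<alpha>/(16*K^2)" and h3: "h \<le> 1/\<alpha>" by (simp_all add: h_def)
  have hK: "K * h \<le> 1/2"
  proof -
    have "K * h \<le> K * (1/(2*K))" using h1 K1 by (intro mult_left_mono) auto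
    thus ?thesis using K1 by simp
  qed
  have hK2: "16*K^2*h \<le> \<alpha>"
  proof -
    have "16*K^2*h \<le> 16*K^2*(\<alpha>/(16*K^2))" using h2 K1 by (intro mult_left_mono) auto
    thus ?thesis using K1 by simp
  qed
  have ha: "\<alpha> * h \<le> 1"
  proof -
    have "\<alpha> * h \<le> \<alpha> * (1/\<alpha>)" using h3 alpha by (intro mult_left_mono) auto
    thus ?thesis using alpha by simp
  qed
  have step: "(\<forall>u\<in>{t..t+h}. norm (z u) \<le> 2 * norm (z t)) \<and> norm (z (t+h))^2 \<le> (1 - \<alpha>*h) * norm (z t)^2"
    if tT: "t \<ge> T1" for t
  proof -
    have ta: "a \<le> t" using tT by (simp add: T1_def)
    have cn: "continuous_on {t..t+h} (\<lambda>u. norm (z u))"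
      using cont[OF ta] by (intro continuous_intros)
    obtain u0 where u0: "u0 \<in> {t..t+h}" and u0max: "\<And>u. u \<in> {t..t+h} \<Longrightarrow> norm (z u) \<le> norm (z u0)"
      using continuous_attains_sup[OF compact_Icc _ cn] hpos by fastforce
    define m where "m = norm (z u0)"
    have m0: "m \<ge> 0" by (simp add: m_def)
    have fb: "norm (f v) \<le> K * m" if "v \<in> {t..t+h}" for v
    proof -
      have "norm (f v) \<le> K * norm (z v)" unfolding f_def using that tT by (intro bN) auto
      also have "\<dots> \<le> K * m" using u0max[OF that] K1 by (simp add: m_def)
      finally show ?thesis .
    qed
    have near: "norm (z u - z t) \<le> K * m * h" if "u \<in> {t..t+h}" for u
    proof -
      have I: "(f has_integral (z u - z t)) (cbox t u)" using eq2[of t u] ta that by simp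
      have fb': "\<And>v. v \<in> cbox t u \<Longrightarrow> norm (f v) \<le> K * m" using fb that by auto
      have "norm (z u - z t) \<le> K * m * (u - t)"
        using has_integral_bound[OF _ I fb'] K1 m0 that by simp
      also have "\<dots> \<le> K * m * h" using that K1 m0 by (intro mult_left_mono) auto
      finally show ?thesis .
    qed
    have "m \<le> norm (z t) + K * m * h"
      using near[OF u0] norm_triangle_ineq2[of "z u0" "z t"] unfolding m_def by linarith
    moreover have "K * m * h \<le> m / 2"
    proof -
      have "K * m * h = m * (K * h)" by simp
      also have "\<dots> \<le> m * (1/2)" by (rule mult_left_mono[OF hK m0])
      finally show ?thesis by simp
    qed
    ultimately have m2: "m \<le> 2 * norm (z t)" by linarith
    have part1: "\<forall>u\<in>{t..t+h}. norm (z u) \<le> 2 * norm (z t)"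
      using u0max m2 unfolding m_def by force
    define x where "x = norm (z t)"
    define D where "D = z (t+h) - z t"
    define Bz where "Bz = B *v z t"
    have x0: "x \<ge> 0" by (simp add: x_def)
    have Dint: "(f has_integral D) (cbox t (t+h))" using eq2[of t "t+h"] ta hpos by (simp add: D_def)
    have Dn: "norm D \<le> K * m * h"
      using near[of "t+h"] hpos by (simp add: D_def)
    have rint: "((\<lambda>v. f v - Bz) has_integral (D - h *\<^sub>R Bz)) (cbox t (t+h))"
    proof -
      have "((\<lambda>v. Bz) has_integral (h *\<^sub>R Bz)) (cbox t (t+h))"
        using has_integral_const_real[of Bz t "t+h"] hpos by simp
      from has_integral_diff[OF Dint this] show ?thesis .
    qed
    have rb: "norm (f v - Bz) \<le> (e0 * m + K * (K * m * h))" if "v \<in> cbox t (t+h)" for v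
    proof -
      have v: "v \<in> {t..t+h}" using that by simp
      have "f v - Bz = (N v - B) *v z v + B *v (z v - z t)"
        by (simp add: f_def Bz_def matrix_vector_mult_diff_rdistrib matrix_vector_right_distrib algebra_simps)
      hence "norm (f v - Bz) \<le> norm ((N v - B) *v z v) + norm (B *v (z v - z t))"
        by (metis norm_triangle_ineq)
      also have "\<dots> \<le> e0 * norm (z v) + K * norm (z v - z t)"
        using bE[of v "z v"] bB[of "z v - z t"] v tT by (intro add_mono) auto
      also have "\<dots> \<le> e0 * m + K * (K * m * h)"
        using u0max[OF v] near[OF v] e0 K1 by (intro add_mono mult_left_mono) (auto simp: m_def)
      finally show ?thesis .
    qed
    have rn: "norm (D - h *\<^sub>R Bz) \<le> (e0 * m + K * (K * m * h)) * h"
    proof -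
      have "0 \<le> e0 * m + K * (K * m * h)" using e0 K1 m0 hpos by simp
      from has_integral_bound[OF this rint rb] show ?thesis using hpos by simp
    qed
    have Dn2: "norm D \<le> 2*K*h*x"
    proof -
      have "K * m * h \<le> K * (2*x) * h" using m2 K1 hpos unfolding x_def
        by (intro mult_right_mono mult_left_mono) auto
      moreover have "K * (2*x) * h = 2*K*h*x" by (simp add: ac_simps)
      ultimately show ?thesis using Dn by linarith
    qed
    have rn2: "norm (D - h *\<^sub>R Bz) \<le> 2*(e0 + K^2*h)*h*x"
    proof -
      have "(e0 * m + K * (K * m * h)) * h = (e0 + K^2*h) * h * m" by (simp add: algebra_simps power2_eq_square)
      also have "\<dots> \<le> (e0 + K^2*h) * h * (2*x)" using m2 e0 hpos unfolding x_def
        by (intro mult_left_mono) auto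
      also have "\<dots> = 2*(e0 + K^2*h)*h*x" by (simp add: ac_simps)
      finally show ?thesis using rn by linarith
    qed
    have inn: "inner (z t) D \<le> - h * \<alpha> * x^2 + x * (2*(e0 + K^2*h)*h*x)"
    proof -
      have "inner (z t) D = h * inner (z t) Bz + inner (z t) (D - h *\<^sub>R Bz)"
        by (simp add: inner_diff_right)
      moreover have "h * inner (z t) Bz \<le> h * (- \<alpha> * x^2)"
        using coer[of "z t"] hpos unfolding Bz_def x_def by (intro mult_left_mono) auto
      moreover have "inner (z t) (D - h *\<^sub>R Bz) \<le> x * (2*(e0 + K^2*h)*h*x)"
      proof -
        have "inner (z t) (D - h *\<^sub>R Bz) \<le> x * norm (D - h *\<^sub>R Bz)"
          using norm_cauchy_schwarz[of "z t" "D - h *\<^sub>R Bz"] by (simp add: x_def)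
        also have "\<dots> \<le> x * (2*(e0 + K^2*h)*h*x)" using rn2 x0 by (intro mult_left_mono)
        finally show ?thesis .
      qed
      ultimately show ?thesis by simp
    qed
    have "norm (z (t+h))^2 = norm (z t + D)^2" by (simp add: D_def)
    also have "\<dots> = x^2 + 2 * inner (z t) D + (norm D)^2"
      by (simp add: x_def power2_norm_eq_inner inner_add_left inner_add_right inner_commute)
    also have "\<dots> \<le> x^2 + 2 * (- h * \<alpha> * x^2 + x * (2*(e0 + K^2*h)*h*x)) + (2*K*h*x)^2"
      using inn power_mono[OF Dn2 norm_ge_zero, of 2] by (intro add_mono order_refl mult_left_mono) auto
    also have "\<dots> = (1 - \<alpha>*h) * x^2 + x^2 * h * (- \<alpha> + 4*e0 + 8*K^2*h)"
      by (simp add: algebra_simps power2_eq_square)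
    also have "\<dots> \<le> (1 - \<alpha>*h) * x^2"
    proof -
      have "- \<alpha> + 4*e0 + 8*K^2*h \<le> 0" using hK2 by (simp add: e0_def)
      hence "x^2 * h * (- \<alpha> + 4*e0 + 8*K^2*h) \<le> 0"
        using hpos by (intro mult_nonneg_nonpos) auto
      thus ?thesis by simp
    qed
    finally show ?thesis using part1 by (simp add: x_def)
  qed
  define q where "q = 1 - \<alpha> * h"
  define g0 where "g0 = norm (z T1)^2"
  have q0: "0 \<le> q" and q1: "q < 1" using ha alpha hpos by (auto simp: q_def)
  have T1a: "T1 \<ge> a" by (simp add: T1_def)
  have P: "norm (z (T1 + real k * h))^2 \<le> q^k * g0" for k
  proof (induction k)
    case 0 thus ?case by (simp add: g0_def)
  next
    case (Suc k)
    have eqs: "T1 + real (Suc k) * h = (T1 + real k * h) + h" by (simp add: algebra_simps)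
    have st: "T1 \<le> T1 + real k * h" using hpos by simp
    have "norm (z (T1 + real (Suc k) * h))^2 \<le> q * norm (z (T1 + real k * h))^2"
      unfolding eqs q_def by (rule conjunct2[OF step[OF st]])
    also have "\<dots> \<le> q * (q^k * g0)" using Suc q0 by (intro mult_left_mono)
    finally show ?case by simp
  qed
  have Pu: "norm (z u)^2 \<le> 4 * (q^k * g0)" if "T1 + real k * h \<le> u" "u \<le> T1 + real k * h + h" for k u
  proof -
    have "norm (z u) \<le> 2 * norm (z (T1 + real k * h))"
      using step[of "T1 + real k * h"] that hpos by auto
    hence "norm (z u)^2 \<le> (2 * norm (z (T1 + real k * h)))^2"
      by (intro power_mono) auto
    also have "\<dots> = 4 * norm (z (T1 + real k * h))^2" by (simp add: power_mult_distrib)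
    also have "\<dots> \<le> 4 * (q^k * g0)" using P[of k] by simp
    finally show ?thesis .
  qed
  show ?thesis
  proof (rule tendstoI)
    fix e :: real assume e: "e > 0"
    have "(\<lambda>k. 4 * g0 * q^k) \<longlonglongrightarrow> 4 * g0 * 0"
      by (intro tendsto_mult tendsto_const LIMSEQ_power_zero) (use q0 q1 in auto)
    hence "eventually (\<lambda>k. 4 * g0 * q^k < e^2) sequentially"
      using e by (intro order_tendstoD(2)) auto
    then obtain k0 where k0: "\<And>k. k \<ge> k0 \<Longrightarrow> 4 * g0 * q^k < e^2"
      by (auto simp: eventually_sequentially)
    show "eventually (\<lambda>u. dist (z u) 0 < e) at_top"
      unfolding eventually_at_top_linorder
    proof (intro exI allI impI)
      fix u assume u: "u \<ge> T1 + real k0 * h"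
      define r where "r = (u - T1) / h"
      have r0: "r \<ge> real k0" using u hpos by (simp add: r_def field_simps)
      define k where "k = nat \<lfloor>r\<rfloor>"
      have kr: "real k \<le> r" "r < real k + 1" using r0 by (auto simp: k_def)
      have kk0: "k \<ge> k0" using r0 by (simp add: k_def le_nat_floor)
      have "real k * h \<le> u - T1" using kr(1) hpos by (simp add: r_def field_simps)
      moreover have "u - T1 \<le> real k * h + h" using kr(2) hpos by (simp add: r_def field_simps)
      ultimately have "norm (z u)^2 \<le> 4 * (q^k * g0)" by (intro Pu) auto
      also have "\<dots> \<le> 4 * g0 * q^k0" using power_decreasing[OF kk0 q0 less_imp_le[OF q1]]
        by (simp add: g0_def mult.commute mult_right_mono)
      also have "\<dots> < e^2" using k0 by simp
      finally have "norm (z u)^2 < e^2" .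
      hence "norm (z u) < e" using e by (simp add: power_less_imp_less_base)
      thus "dist (z u) 0 < e" by simp
    qed
  qed
qed

definition dg :: "('n \<Rightarrow> complex) \<Rightarrow> complex^'n^'n" where
  "dg f = (\<chi> i j. if i = j then f i else 0)"

lemma dg_mult_left: "(dg f ** M) $ i $ j = f i * M $ i $ j"
  by (simp add: dg_def matrix_matrix_mult_def if_distrib[of "\<lambda>x. x * _"] sum.delta cong: if_cong)

lemma dg_mult_right: "(M ** dg f) $ i $ j = M $ i $ j * f j"
  by (simp add: dg_def matrix_matrix_mult_def if_distrib[of "\<lambda>x. _ * x"] sum.delta' cong: if_cong)

lemma dg_dg: "dg f ** dg g = dg (\<lambda>i. f i * g i)"
  by (simp add: Finite_Cartesian_Product.vec_eq_iff dg_mult_left) (simp add: dg_def)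

lemma inner_cmult_self: "inner (a::complex) (c * a) = Re c * (norm a)^2"
  unfolding inner_complex_def cmod_power2 by (simp add: algebra_simps power2_eq_square)

lemma norm_sq_vec: "(norm (w::complex^'n))^2 = (\<Sum>i\<in>UNIV. (norm (w$i))^2)"
  by (simp add: norm_vec_def L2_set_def sum_nonneg)

lemma sum_prod_bound: "(\<Sum>i\<in>UNIV. \<Sum>j\<in>UNIV. (a i::real) * a j) \<le> real CARD('n) * (\<Sum>i\<in>(UNIV::'n::finite set). (a i)^2)"
proof -
  have "(\<Sum>i\<in>UNIV. \<Sum>j\<in>UNIV. a i * a j) \<le> (\<Sum>i\<in>(UNIV::'n set). \<Sum>j\<in>UNIV. ((a i)^2 + (a j)^2) / 2)"
  proof (intro sum_mono)
    fix i j
    have "0 \<le> (a i - a j)^2" by simp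
    thus "a i * a j \<le> ((a i)^2 + (a j)^2) / 2" by (simp add: power2_eq_square algebra_simps)
  qed
  also have "\<dots> = real CARD('n) * (\<Sum>i\<in>(UNIV::'n set). (a i)^2)"
  proof -
    have e1: "(\<Sum>i\<in>(UNIV::'n set). \<Sum>j\<in>UNIV. ((a i)^2 + (a j)^2) / 2)
        = (\<Sum>i\<in>(UNIV::'n set). \<Sum>j\<in>(UNIV::'n set). (a i)^2 / 2) + (\<Sum>i\<in>(UNIV::'n set). \<Sum>j\<in>(UNIV::'n set). (a j)^2 / 2)"
      by (simp only: add_divide_distrib sum.distrib)
    have e2: "(\<Sum>i\<in>(UNIV::'n set). \<Sum>j\<in>(UNIV::'n set). (a i)^2 / 2) = real CARD('n) * (\<Sum>i\<in>(UNIV::'n set). (a i)^2) / 2"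
      by (simp add: sum_distrib_left sum_divide_distrib)
    have e3: "(\<Sum>i\<in>(UNIV::'n set). \<Sum>j\<in>(UNIV::'n set). (a j)^2 / 2) = real CARD('n) * (\<Sum>i\<in>(UNIV::'n set). (a i)^2) / 2"
      by (simp add: sum_divide_distrib[symmetric])
    show ?thesis unfolding e1 e2 e3 by simp
  qed
  finally show ?thesis .
qed

lemma tri_coercive:
  fixes Bv :: "complex^'n^'n" and ix :: "'n \<Rightarrow> nat"
  assumes inj: "inj ix" and tri: "\<And>i j. ix j < ix i \<Longrightarrow> Bv$i$j = 0"
    and diag: "\<And>i. Re (Bv$i$i) < 0"
  shows "\<exists>f \<alpha>. \<alpha> > 0 \<and> (\<forall>i. f i \<noteq> 0) \<and>
           (\<forall>w. inner w ((dg (\<lambda>i. inverse (f i)) ** Bv ** dg f) *v w) \<le> - \<alpha> * (norm w)^2)"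
proof -
  define \<mu> where "\<mu> = Min ((\<lambda>i. - Re (Bv$i$i)) ` UNIV)"
  have mu0: "\<mu> > 0" unfolding \<mu>_def using diag by (simp)
  have mui: "Re (Bv$i$i) \<le> - \<mu>" for i
  proof -
    have "\<mu> \<le> - Re (Bv$i$i)" unfolding \<mu>_def by (rule Min_le) auto
    thus ?thesis by simp
  qed
  define L where "L = l1n Bv"
  have L0: "L \<ge> 0" by (simp add: L_def l1n_nonneg)
  define n where "n = real CARD('n)"
  have n0: "n \<ge> 0" by (simp add: n_def)
  define \<delta> where "\<delta> = min 1 (\<mu> / (2 * (L * n + 1)))"
  have Ln: "0 < 2 * (L * n + 1)" using L0 n0 by (simp add: add_nonneg_pos)
  have d0: "\<delta> > 0" using mu0 Ln unfolding \<delta>_def by (simp del: distrib_left_numeral)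
  have d1: "\<delta> \<le> 1" by (simp add: \<delta>_def)
  have dLn: "\<delta> * (L * n) \<le> \<mu> / 2"
  proof -
    have "\<delta> \<le> \<mu> / (2 * (L * n + 1))" by (simp add: \<delta>_def)
    hence "\<delta> * (2 * (L * n + 1)) \<le> \<mu>" using pos_le_divide_eq[OF Ln] by blast
    thus ?thesis using d0 by (simp add: algebra_simps)
  qed
  define f where "f = (\<lambda>i. complex_of_real (\<delta> ^ ix i))"
  define T where "T = dg (\<lambda>i. inverse (f i)) ** Bv ** dg f"
  have fnz: "f i \<noteq> 0" for i using d0 by (simp add: f_def)
  have Tij: "T$i$j = inverse (f i) * Bv$i$j * f j" for i j
    by (simp add: T_def dg_mult_left dg_mult_right)
  have Tii: "T$i$i = Bv$i$i" for i using fnz[of i] by (simp add: Tij)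
  have Toff: "norm (T$i$j) \<le> \<delta> * L" if "i \<noteq> j" for i j
  proof (cases "ix j < ix i")
    case True thus ?thesis using tri[OF True] d0 L0 by (simp add: Tij)
  next
    case False
    with inj that have lt: "ix i < ix j" by (metis injD nat_neq_iff)
    have "norm (T$i$j) = \<delta> ^ ix j / \<delta> ^ ix i * norm (Bv$i$j)"
      using d0 by (simp add: Tij f_def norm_mult norm_inverse norm_divide norm_power field_simps)
    also have "\<delta> ^ ix j / \<delta> ^ ix i = \<delta> ^ (ix j - ix i)"
      using d0 lt by (simp add: power_diff)
    also have "\<delta> ^ (ix j - ix i) \<le> \<delta> ^ 1"
      using d0 d1 lt by (intro power_decreasing) auto
    finally have "norm (T$i$j) \<le> \<delta> * norm (Bv$i$j)" using d0
      by (simp add: mult_right_mono)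
    also have "norm (Bv$i$j) \<le> L" unfolding L_def l1n_def
      by (rule order_trans[OF member_le_sum[of j UNIV "\<lambda>j. norm (Bv$i$j)"] member_le_sum[of i UNIV "\<lambda>i. \<Sum>j\<in>UNIV. norm (Bv$i$j)"]]) (auto intro: sum_nonneg)
    hence "\<delta> * norm (Bv$i$j) \<le> \<delta> * L" using d0 by (intro mult_left_mono) auto
    finally show ?thesis .
  qed
  have key: "inner w (T *v w) \<le> - (\<mu>/2) * (norm w)^2" for w :: "complex^'n"
  proof -
    define a where "a = (\<lambda>i. norm (w$i))"
    have "inner w (T *v w) = (\<Sum>i\<in>UNIV. \<Sum>j\<in>UNIV. inner (w$i) (T$i$j * w$j))"
      by (simp add: inner_vec_def matrix_vector_mult_def inner_sum_right)
    also have "\<dots> \<le> (\<Sum>i\<in>UNIV. - \<mu> * (a i)^2 + (\<Sum>j\<in>UNIV. \<delta> * L * (a i * a j)))"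
    proof (rule sum_mono)
      fix i
      have "(\<Sum>j\<in>UNIV. inner (w$i) (T$i$j * w$j)) = inner (w$i) (T$i$i * w$i) + (\<Sum>j\<in>UNIV-{i}. inner (w$i) (T$i$j * w$j))"
        by (simp add: sum.remove)
      also have "inner (w$i) (T$i$i * w$i) \<le> - \<mu> * (a i)^2"
        using mult_right_mono[OF mui[of i], of "(a i)^2"] by (simp add: inner_cmult_self Tii a_def)
      also have "(\<Sum>j\<in>UNIV-{i}. inner (w$i) (T$i$j * w$j)) \<le> (\<Sum>j\<in>UNIV-{i}. \<delta> * L * (a i * a j))"
      proof (rule sum_mono)
        fix j assume j: "j \<in> UNIV - {i}"
        have "inner (w$i) (T$i$j * w$j) \<le> norm (w$i) * norm (T$i$j * w$j)" by (rule norm_cauchy_schwarz)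
        also have "\<dots> = norm (T$i$j) * (a i * a j)" by (simp add: a_def norm_mult)
        also have "\<dots> \<le> \<delta> * L * (a i * a j)"
          using Toff[of i j] j by (intro mult_right_mono) (auto simp: a_def)
        finally show "inner (w$i) (T$i$j * w$j) \<le> \<delta> * L * (a i * a j)" .
      qed
      also have "(\<Sum>j\<in>UNIV-{i}. \<delta> * L * (a i * a j)) \<le> (\<Sum>j\<in>UNIV. \<delta> * L * (a i * a j))"
        using d0 L0 by (intro sum_mono2) (auto simp: a_def)
      finally show "(\<Sum>j\<in>UNIV. inner (w$i) (T$i$j * w$j)) \<le> - \<mu> * (a i)^2 + (\<Sum>j\<in>UNIV. \<delta> * L * (a i * a j))"
        by simp
    qed
    also have "\<dots> = - \<mu> * (\<Sum>i\<in>UNIV. (a i)^2) + \<delta> * L * (\<Sum>i\<in>UNIV. \<Sum>j\<in>UNIV. a i * a j)"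
      by (simp add: sum.distrib sum_distrib_left sum_subtractf sum_negf)
    also have "\<dots> \<le> - \<mu> * (\<Sum>i\<in>UNIV. (a i)^2) + \<delta> * L * (n * (\<Sum>i\<in>UNIV. (a i)^2))"
      using sum_prod_bound[of a] d0 L0 unfolding n_def by (intro add_left_mono mult_left_mono) auto
    also have "\<dots> = (- \<mu> + \<delta> * (L * n)) * (\<Sum>i\<in>UNIV. (a i)^2)" by (simp add: algebra_simps)
    also have "\<dots> \<le> (- (\<mu>/2)) * (\<Sum>i\<in>UNIV. (a i)^2)"
      using dLn by (intro mult_right_mono) (auto intro: sum_nonneg)
    also have "(\<Sum>i\<in>UNIV. (a i)^2) = (norm w)^2" by (simp add: a_def norm_sq_vec)
    finally show ?thesis by simp
  qed
  show ?thesis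
    using mu0 fnz key unfolding T_def by (intro exI[of _ f] exI[of _ "\<mu>/2"]) auto
qed


definition to_j :: "(nat \<Rightarrow> 'n::finite) \<Rightarrow> complex^'n^'n \<Rightarrow> complex Matrix.mat" where
  "to_j g M = Matrix.mat CARD('n) CARD('n) (\<lambda>(a,b). M $ g a $ g b)"

definition from_j :: "('n::finite \<Rightarrow> nat) \<Rightarrow> complex Matrix.mat \<Rightarrow> complex^'n^'n" where
  "from_j ix X = (\<chi> i j. X $$ (ix i, ix j))"

locale idx =
  fixes g :: "nat \<Rightarrow> 'n::finite"
  assumes bij: "bij_betw g {0..<CARD('n)} UNIV"
begin

definition ix :: "'n \<Rightarrow> nat" where "ix = inv_into {0..<CARD('n)} g"

lemma ix_lt: "ix i < CARD('n)"
proof -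
  have "i \<in> g ` {0..<CARD('n)}" using bij by (simp add: bij_betw_def)
  hence "ix i \<in> {0..<CARD('n)}" unfolding ix_def by (rule inv_into_into)
  thus ?thesis by simp
qed

lemma g_ix: "g (ix i) = i"
proof -
  have "i \<in> g ` {0..<CARD('n)}" using bij by (simp add: bij_betw_def)
  thus ?thesis unfolding ix_def by (rule f_inv_into_f)
qed

lemma ix_g: "k < CARD('n) \<Longrightarrow> ix (g k) = k"
  unfolding ix_def using bij by (intro inv_into_f_f) (auto simp: bij_betw_def)

lemma inj_ix: "inj ix"
  by (metis g_ix injI)

lemma reindex: "(\<Sum>k\<in>{0..<CARD('n)}. h (g k)) = (\<Sum>l\<in>UNIV. (h l :: complex))"
  using sum.reindex_bij_betw[OF bij] .

lemma from_to: "from_j ix (to_j g M) = M"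
  by (simp add: from_j_def to_j_def ix_lt g_ix Finite_Cartesian_Product.vec_eq_iff)

lemma to_carrier: "to_j g M \<in> carrier_mat CARD('n) CARD('n)"
  by (simp add: to_j_def)

lemma from_mult:
  assumes X: "X \<in> carrier_mat CARD('n) CARD('n)" and Y: "Y \<in> carrier_mat CARD('n) CARD('n)"
  shows "from_j ix (X * Y) = from_j ix X ** from_j ix Y"
proof -
  have "(X * Y) $$ (ix i, ix j) = (\<Sum>l\<in>UNIV. X $$ (ix i, ix l) * Y $$ (ix l, ix j))" for i j
  proof -
    have "(X * Y) $$ (ix i, ix j) = (\<Sum>k\<in>{0..<CARD('n)}. X $$ (ix i, k) * Y $$ (k, ix j))"
      using X Y ix_lt[of i] ix_lt[of j] by (simp add: scalar_prod_def)
    also have "\<dots> = (\<Sum>k\<in>{0..<CARD('n)}. X $$ (ix i, ix (g k)) * Y $$ (ix (g k), ix j))"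
      by (intro sum.cong refl) (simp add: ix_g)
    also have "\<dots> = (\<Sum>l\<in>UNIV. X $$ (ix i, ix l) * Y $$ (ix l, ix j))"
      by (rule reindex)
    finally show ?thesis .
  qed
  thus ?thesis by (simp add: from_j_def matrix_matrix_mult_def Finite_Cartesian_Product.vec_eq_iff)
qed

lemma from_one: "from_j ix (1\<^sub>m CARD('n)) = mat 1"
  using inj_ix by (simp add: from_j_def Finite_Cartesian_Product.vec_eq_iff ix_lt Finite_Cartesian_Product.mat_def inj_eq)

lemma eigen_transfer:
  assumes "eigenvalue (to_j g (cmat A0)) e"
  shows "is_eigenvalue A0 e"
proof -
  let ?A = "to_j g (cmat A0)"
  obtain v where v: "v \<in> carrier_vec CARD('n)" "v \<noteq> 0\<^sub>v CARD('n)" "?A *\<^sub>v v = e \<cdot>\<^sub>v v"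
    using assms unfolding eigenvalue_def eigenvector_def by (auto simp: to_j_def)
  define vv :: "complex^'n" where "vv = (\<chi> i. vec_index v (ix i))"
  have "\<exists>k<CARD('n). vec_index v k \<noteq> 0"
  proof (rule ccontr)
    assume "\<not> ?thesis"
    hence "v = 0\<^sub>v CARD('n)" using v(1) by (intro eq_vecI) auto
    with v(2) show False by simp
  qed
  then obtain k where k: "k < CARD('n)" "vec_index v k \<noteq> 0" by blast
  have vv0: "vv \<noteq> 0"
  proof
    assume "vv = 0"
    hence "vv $ g k = 0" by simp
    thus False using k by (simp add: vv_def ix_g)
  qed
  have "cmat A0 *v vv = e *s vv"
  proof -
    have "(cmat A0 *v vv) $ i = (e *s vv) $ i" for i
    proof -
      have "vec_index (?A *\<^sub>v v) (ix i) = (\<Sum>k\<in>{0..<CARD('n)}. cmat A0 $ i $ g k * vec_index v k)"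
        using v(1) ix_lt[of i] by (simp add: to_j_def scalar_prod_def g_ix)
      also have "\<dots> = (\<Sum>k\<in>{0..<CARD('n)}. cmat A0 $ i $ g k * vec_index v (ix (g k)))"
        by (intro sum.cong refl) (simp add: ix_g)
      also have "\<dots> = (\<Sum>l\<in>UNIV. cmat A0 $ i $ l * vec_index v (ix l))"
        by (rule reindex)
      finally have "(cmat A0 *v vv) $ i = vec_index (?A *\<^sub>v v) (ix i)"
        by (simp add: matrix_vector_mult_def vv_def)
      also have "\<dots> = e * vec_index v (ix i)" using v ix_lt[of i] by simp
      finally show ?thesis by (simp add: vv_def)
    qed
    thus ?thesis by (simp add: Finite_Cartesian_Product.vec_eq_iff)
  qed
  thus ?thesis using vv0 unfolding is_eigenvalue_def by blast
qed

end

lemma stable_coercive: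
  assumes st: "asymp_stable (A0::real^'n^'n)"
  shows "\<exists>(S::complex^'n^'n) Si \<alpha>. \<alpha> > 0 \<and> Si ** S = mat 1 \<and> (\<forall>w. inner w ((S ** cmat A0 ** Si) *v w) \<le> - \<alpha> * (norm w)^2)"
proof -
  obtain g where bij: "bij_betw g {0..<CARD('n)} (UNIV::'n set)"
    using ex_bij_betw_nat_finite[of "UNIV::'n set"] by auto
  interpret idx g by (rule idx.intro[OF bij])
  define A where "A = to_j g (cmat A0)"
  have Ac: "A \<in> carrier_mat CARD('n) CARD('n)" by (simp add: A_def to_carrier)
  obtain es where cp: "char_poly A = (\<Prod>a\<leftarrow>es. [:-a, 1:])"
    using char_poly_factorized[OF Ac] by blast
  obtain B P Q where sd: "schur_decomposition A es = (B,P,Q)"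
    by (cases "schur_decomposition A es") auto
  from schur_decomposition[OF Ac cp sd]
  have sim: "similar_mat_wit A B P Q" and ut: "upper_triangular B" and dB: "diag_mat B = es" by auto
  have dA: "dim_row A = CARD('n)" using Ac by simp
  have Bc: "B \<in> carrier_mat CARD('n) CARD('n)" and Pc: "P \<in> carrier_mat CARD('n) CARD('n)"
    and Qc: "Q \<in> carrier_mat CARD('n) CARD('n)" and PQ: "P * Q = 1\<^sub>m CARD('n)"
    and QP: "Q * P = 1\<^sub>m CARD('n)" and APBQ: "A = P * B * Q"
    using sim unfolding similar_mat_wit_def Let_def dA by auto
  have eig: "Re (B $$ (k,k)) < 0" if k: "k < CARD('n)" for k
  proof -
    have "B $$ (k,k) \<in> set es" using dB k Bc by (auto simp: diag_mat_def)
    hence "poly (char_poly A) (B $$ (k,k)) = 0" unfolding cp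
      by (auto simp: poly_prod_list prod_list_zero_iff)
    hence "eigenvalue A (B $$ (k,k))" using eigenvalue_root_char_poly[OF Ac] by simp
    hence "is_eigenvalue A0 (B $$ (k,k))" using eigen_transfer by (simp add: A_def)
    thus ?thesis using st unfolding asymp_stable_def by blast
  qed
  define Bv where "Bv = from_j ix B"
  define Pv where "Pv = from_j ix P"
  define Qv where "Qv = from_j ix Q"
  have tri: "Bv$i$j = 0" if "ix j < ix i" for i j
    using ut ix_lt[of i] that Bc unfolding upper_triangular_def Bv_def from_j_def by auto
  have diag: "Re (Bv$i$i) < 0" for i
    using eig[OF ix_lt[of i]] by (simp add: Bv_def from_j_def)
  obtain f \<alpha> where a0: "\<alpha> > 0" and fnz: "\<And>i. f i \<noteq> 0"
    and co: "\<And>w. inner w ((dg (\<lambda>i. inverse (f i)) ** Bv ** dg f) *v w) \<le> - \<alpha> * (norm w)^2"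
    using tri_coercive[OF inj_ix tri diag] by blast
  have cA: "cmat A0 = Pv ** Bv ** Qv"
  proof -
    have "cmat A0 = from_j ix A" by (simp add: A_def from_to)
    also have "\<dots> = from_j ix (P * B) ** Qv"
      unfolding APBQ Qv_def by (rule from_mult[OF mult_carrier_mat[OF Pc Bc] Qc])
    also have "from_j ix (P * B) = Pv ** Bv"
      unfolding Pv_def Bv_def by (rule from_mult[OF Pc Bc])
    finally show ?thesis .
  qed
  have QPv: "Qv ** Pv = mat 1" unfolding Qv_def Pv_def
    by (simp add: from_mult[OF Qc Pc, symmetric] QP from_one)
  have PQv: "Pv ** Qv = mat 1" unfolding Qv_def Pv_def
    by (simp add: from_mult[OF Pc Qc, symmetric] PQ from_one)
  have QP': "X ** Qv ** Pv = X" for X :: "complex^'n^'n"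
    by (metis matrix_mul_assoc QPv matrix_mul_rid)
  have dgid: "dg f ** dg (\<lambda>i. inverse (f i)) = mat 1"
  proof -
    have "dg f ** dg (\<lambda>i. inverse (f i)) = dg (\<lambda>i. f i * inverse (f i))" by (rule dg_dg)
    also have "\<dots> = dg (\<lambda>i. 1)" using fnz by simp
    also have "\<dots> = mat 1" by (simp add: dg_def Finite_Cartesian_Product.mat_def)
    finally show ?thesis .
  qed
  have dg': "X ** dg f ** dg (\<lambda>i. inverse (f i)) = X" for X :: "complex^'n^'n"
    by (metis matrix_mul_assoc dgid matrix_mul_rid)
  define S where "S = dg (\<lambda>i. inverse (f i)) ** Qv"
  define Si where "Si = Pv ** dg f"
  have "Si ** S = mat 1"
    by (simp add: S_def Si_def matrix_mul_assoc dg' PQv)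
  moreover have "S ** cmat A0 ** Si = dg (\<lambda>i. inverse (f i)) ** Bv ** dg f"
    by (simp add: S_def Si_def cA matrix_mul_assoc QP')
  ultimately show ?thesis using a0 co by (intro exI[of _ S] exI[of _ Si] exI[of _ \<alpha>]) auto
qed

definition cvec :: "real^'n \<Rightarrow> complex^'n" where
  "cvec x = (\<chi> i. complex_of_real (x$i))"

lemma cmat_cvec: "cmat M *v cvec x = cvec (M *v x)"
  by (simp add: cmat_def cvec_def matrix_vector_mult_def Finite_Cartesian_Product.vec_eq_iff)

lemma linear_cvec: "linear cvec"
  by (rule linearI) (simp_all add: cvec_def Finite_Cartesian_Product.vec_eq_iff of_real_def scaleR_add_left)

lemma bounded_linear_cvec: "bounded_linear cvec"
  using linear_cvec by (simp add: linear_conv_bounded_linear)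

lemma cmat_cont: "isCont (cmat :: real^'n^'n \<Rightarrow> complex^'n^'n) X"
  unfolding isCont_def cmat_def by (intro tendsto_intros)

lemma decay_real:
  fixes x :: "real \<Rightarrow> real^'n" and M :: "real \<Rightarrow> real^'n^'n"
  assumes st: "asymp_stable A0" and conv: "(M \<longlongrightarrow> A0) at_top"
    and eq: "\<And>t. t \<ge> a \<Longrightarrow> ((\<lambda>u. M u *v x u) has_integral (x t - x a)) {a..t}"
  shows "(x \<longlongrightarrow> 0) at_top"
proof -
  obtain S Si :: "complex^'n^'n" and \<alpha> :: real where a: "\<alpha> > 0" and SS: "Si ** S = mat 1"
    and co: "\<And>w. inner w ((S ** cmat A0 ** Si) *v w) \<le> - \<alpha> * (norm w)^2"
    using stable_coercive[OF st] by blast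
  define z where "z = (\<lambda>u. S *v cvec (x u))"
  define N where "N = (\<lambda>u. S ** cmat (M u) ** Si)"
  have Nz: "N u *v z u = S *v cvec (M u *v x u)" for u
  proof -
    have "N u *v z u = ((S ** cmat (M u) ** Si) ** S) *v cvec (x u)"
      by (simp add: N_def z_def matrix_vector_mul_assoc)
    also have "(S ** cmat (M u) ** Si) ** S = S ** cmat (M u)"
      by (metis matrix_mul_assoc SS matrix_mul_rid)
    also have "(S ** cmat (M u)) *v cvec (x u) = S *v (cmat (M u) *v cvec (x u))"
      by (simp add: matrix_vector_mul_assoc)
    finally show ?thesis by (simp add: cmat_cvec)
  qed
  have bl: "bounded_linear (\<lambda>y. S *v cvec y)"
    by (rule bounded_linear_compose[OF matrix_vector_mul_bounded_linear bounded_linear_cvec])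
  have eqz: "((\<lambda>u. N u *v z u) has_integral (z t - z a)) {a..t}" if "t \<ge> a" for t
  proof -
    have "((\<lambda>u. S *v cvec (M u *v x u)) has_integral (S *v cvec (x t - x a))) {a..t}"
      using has_integral_linear[OF eq[OF that] bl] by (simp add: o_def)
    moreover have "S *v cvec (x t - x a) = z t - z a"
      by (simp add: z_def linear_diff[OF linear_cvec] matrix_vector_mult_diff_distrib)
    ultimately show ?thesis by (simp add: Nz)
  qed
  have convN: "(N \<longlongrightarrow> S ** cmat A0 ** Si) at_top"
  proof -
    have "((\<lambda>u. cmat (M u)) \<longlongrightarrow> cmat A0) at_top"
      using conv cmat_cont isCont_tendsto_compose by blast
    thus ?thesis unfolding N_def matrix_matrix_mult_def
      by (intro tendsto_intros)
  qed
  have "(z \<longlongrightarrow> 0) at_top"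
    by (rule decay[OF a co convN eqz])
  hence "((\<lambda>u. Si *v z u) \<longlongrightarrow> Si *v 0) at_top"
    by (rule bounded_linear.tendsto[OF matrix_vector_mul_bounded_linear])
  hence cz: "((\<lambda>u. cvec (x u)) \<longlongrightarrow> 0) at_top"
    by (simp add: z_def matrix_vector_mul_assoc SS)
  show ?thesis
  proof (rule vec_tendstoI)
    fix i
    have "((\<lambda>u. Re (cvec (x u) $ i)) \<longlongrightarrow> Re ((0::complex^'n) $ i)) at_top"
      by (intro tendsto_intros cz)
    thus "((\<lambda>u. x u $ i) \<longlongrightarrow> 0 $ i) at_top" by (simp add: cvec_def)
  qed
qed

lemma bl_mv_right: "bounded_linear (\<lambda>Y::real^'n^'m. Y *v v)"
  unfolding linear_conv_bounded_linear[symmetric]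
  by (rule linearI) (simp_all add: Finite_Cartesian_Product.vec_eq_iff matrix_vector_mult_def sum_distrib_left algebra_simps sum.distrib)

lemma decay_mat:
  fixes X :: "real \<Rightarrow> real^'n^'n" and M :: "real \<Rightarrow> real^'n^'n"
  assumes st: "asymp_stable A0" and conv: "(M \<longlongrightarrow> A0) at_top"
    and eq: "\<And>t. t \<ge> a \<Longrightarrow> ((\<lambda>u. M u ** X u) has_integral (X t - X a)) {a..t}"
  shows "(X \<longlongrightarrow> 0) at_top"
proof -
  have col: "((\<lambda>u. X u *v axis j 1) \<longlongrightarrow> 0) at_top" for j
  proof (rule decay_real[OF st conv])
    fix t assume "t \<ge> a"
    from has_integral_linear[OF eq[OF this] bl_mv_right[of "axis j 1"]]
    show "((\<lambda>u. M u *v (X u *v axis j 1)) has_integral (X t *v axis j 1 - X a *v axis j 1)) {a..t}"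
      by (simp add: o_def matrix_vector_mul_assoc matrix_vector_mult_diff_rdistrib)
  qed
  show ?thesis
  proof (rule vec_tendstoI, rule vec_tendstoI)
    fix i j
    have "((\<lambda>u. (X u *v axis j 1) $ i) \<longlongrightarrow> (0::real^'n) $ i) at_top"
      by (intro tendsto_intros col)
    thus "((\<lambda>u. X u $ i $ j) \<longlongrightarrow> 0 $ i $ j) at_top"
      by (simp add: matrix_vector_mult_def axis_def if_distrib cong: if_cong)
  qed
qed

lemma norm_le_l1n: "norm (M::'a::real_normed_vector^'n^'m) \<le> l1n M"
proof -
  have "norm M \<le> (\<Sum>i\<in>UNIV. norm (M$i))" by (rule norm_vec_le_l1)
  also have "\<dots> \<le> (\<Sum>i\<in>UNIV. \<Sum>j\<in>UNIV. norm (M$i$j))"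
    by (intro sum_mono norm_vec_le_l1)
  finally show ?thesis by (simp add: l1n_def)
qed

lemma swap_helper: "(\<Sum>j\<in>UNIV. \<Sum>k\<in>UNIV. (a k::real) * b k j) = (\<Sum>k\<in>(UNIV::'k::finite set). a k * (\<Sum>j\<in>(UNIV::'j::finite set). b k j))"
  by (subst sum.swap) (simp add: sum_distrib_left)

lemma l1n_mult: "l1n ((A::real^'n^'m) ** (B::real^'k^'n)) \<le> l1n A * l1n B"
proof -
  have "l1n (A ** B) = (\<Sum>i\<in>UNIV. \<Sum>j\<in>UNIV. \<bar>\<Sum>k\<in>UNIV. A$i$k * B$k$j\<bar>)"
    by (simp add: l1n_def matrix_matrix_mult_def)
  also have "\<dots> \<le> (\<Sum>i\<in>UNIV. \<Sum>j\<in>UNIV. \<Sum>k\<in>UNIV. \<bar>A$i$k\<bar> * \<bar>B$k$j\<bar>)"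
    by (intro sum_mono) (simp add: abs_mult[symmetric] sum_abs)
  also have "\<dots> = (\<Sum>i\<in>UNIV. \<Sum>k\<in>UNIV. \<bar>A$i$k\<bar> * (\<Sum>j\<in>UNIV. \<bar>B$k$j\<bar>))"
    by (simp only: swap_helper)
  also have "\<dots> \<le> (\<Sum>i\<in>UNIV. \<Sum>k\<in>UNIV. \<bar>A$i$k\<bar> * l1n B)"
  proof (intro sum_mono mult_left_mono)
    fix k
    show "(\<Sum>j\<in>UNIV. \<bar>B$k$j\<bar>) \<le> l1n B"
      unfolding l1n_def real_norm_def
      by (rule member_le_sum[of k UNIV "\<lambda>k. \<Sum>j\<in>UNIV. \<bar>B$k$j\<bar>"]) auto
  qed auto
  also have "\<dots> = l1n A * l1n B"
    by (simp add: l1n_def sum_distrib_right)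
  finally show ?thesis .
qed

lemma mat_pow_bound: "l1n (mat_pow A k) \<le> l1n (mat 1 :: real^'n^'n) * l1n (A::real^'n^'n) ^ k"
proof (induction k)
  case 0 thus ?case by simp
next
  case (Suc k)
  have "l1n (mat_pow A (Suc k)) \<le> l1n A * l1n (mat_pow A k)" by (simp add: l1n_mult)
  also have "\<dots> \<le> l1n A * (l1n (mat 1 :: real^'n^'n) * l1n A ^ k)"
    using Suc l1n_nonneg by (intro mult_left_mono) auto
  finally show ?case by (simp add: algebra_simps)
qed

lemma summable_mexp: "summable (\<lambda>k. (1 / fact k) *\<^sub>R mat_pow (A::real^'n^'n) k)"
proof (rule summable_norm_cancel, rule summable_comparison_test)
  show "\<exists>N. \<forall>n\<ge>N. norm (norm ((1 / fact n) *\<^sub>R mat_pow A n)) \<le> l1n (mat 1 :: real^'n^'n) * (inverse (fact n) * l1n A ^ n)"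
  proof (intro exI allI impI)
    fix n :: nat
    have "norm (norm ((1 / fact n) *\<^sub>R mat_pow A n)) = (1 / fact n) * norm (mat_pow A n)" by simp
    also have "\<dots> \<le> (1 / fact n) * (l1n (mat 1 :: real^'n^'n) * l1n A ^ n)"
      using norm_le_l1n[of "mat_pow A n"] mat_pow_bound[of A n] by (intro mult_left_mono) auto
    finally show "norm (norm ((1 / fact n) *\<^sub>R mat_pow A n)) \<le> l1n (mat 1 :: real^'n^'n) * (inverse (fact n) * l1n A ^ n)"
      by (simp add: field_simps)
  qed
  show "summable (\<lambda>n. l1n (mat 1 :: real^'n^'n) * (inverse (fact n) * l1n A ^ n))"
    by (intro summable_mult summable_exp)
qed

lemma mat_pow_scaleR: "mat_pow (s *\<^sub>R A) k = (s^k) *\<^sub>R mat_pow (A::real^'n^'n) k"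
proof (induction k)
  case 0 thus ?case by simp
next
  case (Suc k)
  thus ?case by (simp add: Finite_Cartesian_Product.vec_eq_iff matrix_matrix_mult_def sum_distrib_left algebra_simps)
qed

lemma bl_entry: "bounded_linear (\<lambda>M::real^'n^'m. M $ i $ j)"
proof -
  have 1: "bounded_linear (\<lambda>x::real^'n. x $ j)" by (rule bounded_linear_vec_nth)
  have 2: "bounded_linear (\<lambda>M::real^'n^'m. M $ i)" by (rule bounded_linear_vec_nth)
  show ?thesis using bounded_linear_compose[OF 1 2] .
qed

definition cf :: "real^'n^'n \<Rightarrow> 'n \<Rightarrow> 'n \<Rightarrow> nat \<Rightarrow> real" where
  "cf A i j k = mat_pow A k $ i $ j / fact k"

lemma mexp_entry:
  shows "summable (\<lambda>k. cf A i j k * s^k)" and "mat_exp (s *\<^sub>R A) $ i $ j = (\<Sum>k. cf A i j k * s^k)"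
proof -
  have eq: "(\<lambda>k. ((1 / fact k) *\<^sub>R mat_pow (s *\<^sub>R A) k) $ i $ j) = (\<lambda>k. cf A i j k * s^k)"
    by (rule ext) (simp add: cf_def mat_pow_scaleR field_simps)
  from bounded_linear.summable[OF bl_entry summable_mexp[of "s *\<^sub>R A"], of i j]
  show "summable (\<lambda>k. cf A i j k * s^k)" by (simp only: eq)
  from bounded_linear.suminf[OF bl_entry summable_mexp[of "s *\<^sub>R A"], of i j]
  show "mat_exp (s *\<^sub>R A) $ i $ j = (\<Sum>k. cf A i j k * s^k)" by (simp only: eq mat_exp_def)
qed

lemma mexp_entry_deriv:
  "((\<lambda>s. mat_exp (s *\<^sub>R A) $ i $ j) has_real_derivative (A ** mat_exp (x *\<^sub>R A)) $ i $ j) (at x)"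
proof -
  have f: "(\<lambda>s. mat_exp (s *\<^sub>R A) $ i $ j) = (\<lambda>s. \<Sum>k. cf A i j k * s^k)"
    by (simp add: mexp_entry(2))
  have d: "((\<lambda>s. \<Sum>k. cf A i j k * s^k) has_real_derivative (\<Sum>k. diffs (cf A i j) k * x^k)) (at x)"
    by (rule termdiffs_strong_converges_everywhere) (rule mexp_entry(1))
  have "(A ** mat_exp (x *\<^sub>R A)) $ i $ j = (\<Sum>l\<in>UNIV. A$i$l * (\<Sum>k. cf A l j k * x^k))"
    by (simp add: matrix_matrix_mult_def mexp_entry(2))
  also have "\<dots> = (\<Sum>l\<in>UNIV. \<Sum>k. A$i$l * (cf A l j k * x^k))"
    by (intro sum.cong refl suminf_mult[symmetric] mexp_entry(1))
  also have "\<dots> = (\<Sum>k. \<Sum>l\<in>UNIV. A$i$l * (cf A l j k * x^k))"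
    by (rule suminf_sum[symmetric]) (intro summable_mult mexp_entry(1))
  also have "\<dots> = (\<Sum>k. diffs (cf A i j) k * x^k)"
  proof (rule suminf_cong)
    fix k
    have "(\<Sum>l\<in>UNIV. A$i$l * (cf A l j k * x^k)) = (\<Sum>l\<in>UNIV. A$i$l * mat_pow A k $ l $ j) / fact k * x^k"
      by (simp add: cf_def sum_distrib_right sum_divide_distrib mult.assoc)
    also have "\<dots> = mat_pow A (Suc k) $ i $ j / fact k * x^k"
      by (simp add: matrix_matrix_mult_def)
    also have "\<dots> = diffs (cf A i j) k * x^k"
    proof -
      have pos: "0 < (fact k::real) + fact k * real k" by (simp add: add_pos_nonneg)
      show ?thesis using pos by (simp add: diffs_def cf_def field_simps)
    qed
    finally show "(\<Sum>l\<in>UNIV. A$i$l * (cf A l j k * x^k)) = diffs (cf A i j) k * x^k" .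
  qed
  finally show ?thesis using d f by simp
qed

lemma vec_deriv_entries:
  fixes f :: "real \<Rightarrow> real^'n^'m"
  assumes "\<And>i j. ((\<lambda>s. f s $ i $ j) has_real_derivative (D $ i $ j)) (at x within S)"
  shows "(f has_vector_derivative D) (at x within S)"
proof -
  have "(f has_derivative (\<lambda>h. h *\<^sub>R D)) (at x within S)"
  proof (subst has_derivative_componentwise_within, intro ballI)
    fix b :: "real^'n^'m" assume "b \<in> Basis"
    then obtain i j where b: "b = axis i (axis j 1)" by (auto simp: Basis_vec_def)
    have "((\<lambda>s. f s $ i $ j) has_derivative (\<lambda>h. D $ i $ j * h)) (at x within S)"
      using assms[of i j] by (simp add: has_field_derivative_def)
    thus "((\<lambda>s. inner (f s) b) has_derivative (\<lambda>h. inner (h *\<^sub>R D) b)) (at x within S)"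
      by (simp add: b inner_axis mult.commute)
  qed
  thus ?thesis by (simp add: has_vector_derivative_def)
qed

lemma psi_deriv:
  "((\<lambda>t. mat_exp ((t - t0) *\<^sub>R A)) has_vector_derivative (A ** mat_exp ((x - t0) *\<^sub>R A))) (at x within S)"
proof (rule vec_deriv_entries)
  fix i j
  have g: "((\<lambda>t. t - t0) has_real_derivative 1) (at x within S)"
    by (auto intro!: derivative_eq_intros)
  from DERIV_chain2[OF mexp_entry_deriv[of A i j "x - t0"] g]
  show "((\<lambda>t. mat_exp ((t - t0) *\<^sub>R A) $ i $ j) has_real_derivative (A ** mat_exp ((x - t0) *\<^sub>R A)) $ i $ j) (at x within S)"
    by simp
qed

lemma psi_integral:
  assumes "t \<ge> t0"
  shows "((\<lambda>s. A ** mat_exp ((s - t0) *\<^sub>R A)) has_integral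
           (mat_exp ((t - t0) *\<^sub>R A) - mat_exp ((t0 - t0) *\<^sub>R A))) {t0..t}"
  by (rule fundamental_theorem_of_calculus[OF assms]) (rule psi_deriv)

lemma psi_cont: "continuous_on S (\<lambda>t. mat_exp ((t - t0) *\<^sub>R A))"
  by (rule continuous_at_imp_continuous_on) (use psi_deriv has_vector_derivative_continuous in blast)

lemma mat_norm2_nonneg: "0 \<le> mat_norm2 X"
  unfolding mat_norm2_def by (rule onorm_pos_le[OF matrix_vector_mul_bounded_linear])

lemma mat_norm2_le: "mat_norm2 X \<le> l1n X"
  unfolding mat_norm2_def l1n_def real_norm_def by (rule onorm_le_matrix_component_sum)

lemma mat_norm2_tri: "mat_norm2 X \<le> mat_norm2 Y + mat_norm2 (X - Y)"
proof -
  have "onorm (\<lambda>x. Y *v x + (X - Y) *v x) \<le> onorm ((*v) Y) + onorm ((*v) (X - Y))"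
    by (rule onorm_triangle[OF matrix_vector_mul_bounded_linear matrix_vector_mul_bounded_linear])
  moreover have "(\<lambda>x. Y *v x + (X - Y) *v x) = (*v) X"
    by (rule ext) (simp add: matrix_vector_mult_diff_rdistrib)
  ultimately show ?thesis by (simp add: mat_norm2_def)
qed

lemma l1n_minus: "l1n (Y - X) = l1n (X - (Y::real^'n^'m))"
  unfolding l1n_def by (simp add: abs_minus_commute)

lemma mat_norm2_isCont: "isCont mat_norm2 (Y::real^'n^'n)"
proof -
  have "((\<lambda>X. X - Y) \<longlongrightarrow> Y - Y) (at Y)"
    by (intro tendsto_intros)
  hence "((\<lambda>X. X - Y) \<longlongrightarrow> 0) (at Y)" by simp
  hence l: "((\<lambda>X. l1n (X - Y)) \<longlongrightarrow> 0) (at Y)" by (rule tendsto_l1n)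
  have lo: "((\<lambda>X. mat_norm2 Y - l1n (X - Y)) \<longlongrightarrow> mat_norm2 Y - 0) (at Y)"
    by (intro tendsto_intros l)
  have up: "((\<lambda>X. mat_norm2 Y + l1n (X - Y)) \<longlongrightarrow> mat_norm2 Y + 0) (at Y)"
    by (intro tendsto_intros l)
  have "(mat_norm2 \<longlongrightarrow> mat_norm2 Y) (at Y)"
  proof (rule tendsto_sandwich[OF _ _ lo[simplified] up[simplified]])
    show "\<forall>\<^sub>F X in at Y. mat_norm2 Y - l1n (X - Y) \<le> mat_norm2 X"
    proof (intro always_eventually allI)
      fix X
      have "mat_norm2 Y \<le> mat_norm2 X + mat_norm2 (Y - X)" by (rule mat_norm2_tri)
      moreover have "mat_norm2 (Y - X) \<le> l1n (Y - X)" by (rule mat_norm2_le)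
      moreover have "l1n (Y - X) = l1n (X - Y)" by (rule l1n_minus)
      ultimately show "mat_norm2 Y - l1n (X - Y) \<le> mat_norm2 X" by linarith
    qed
    show "\<forall>\<^sub>F X in at Y. mat_norm2 X \<le> mat_norm2 Y + l1n (X - Y)"
    proof (intro always_eventually allI)
      fix X
      have "mat_norm2 X \<le> mat_norm2 Y + mat_norm2 (X - Y)" by (rule mat_norm2_tri)
      moreover have "mat_norm2 (X - Y) \<le> l1n (X - Y)" by (rule mat_norm2_le)
      ultimately show "mat_norm2 X \<le> mat_norm2 Y + l1n (X - Y)" by linarith
    qed
  qed
  thus ?thesis by (simp add: isCont_def)
qed

lemma cesaro:
  fixes h :: "real \<Rightarrow> real"
  assumes t00: "t0 \<ge> 0" and cont: "\<And>T. continuous_on {t0..T} h" and nn: "\<And>t. 0 \<le> h t"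
    and lim: "(h \<longlongrightarrow> 0) at_top"
  shows "((\<lambda>T. (1/T) * integral {t0..T} h) \<longlongrightarrow> 0) at_top"
proof (rule tendstoI)
  fix e :: real assume e: "e > 0"
  have "eventually (\<lambda>t. h t < e/2) at_top" using lim e by (intro order_tendstoD(2)) auto
  then obtain T0 where T0: "\<And>t. t \<ge> T0 \<Longrightarrow> h t < e/2" by (auto simp: eventually_at_top_linorder)
  define T1 where "T1 = max T0 t0"
  define C where "C = integral {t0..T1} h"
  have C0: "C \<ge> 0" unfolding C_def
    by (rule integral_nonneg) (use integrable_continuous_real[OF cont] nn in auto)
  show "eventually (\<lambda>T. dist ((1/T) * integral {t0..T} h) 0 < e) at_top"
    unfolding eventually_at_top_linorder
  proof (intro exI allI impI)
    fix T assume T: "T \<ge> max T1 (max 1 (2*C/e + 1))"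
    have T1T: "T1 \<le> T" and Tpos: "T > 0" and TC: "T > 2*C/e" using T by auto
    have t0T1: "t0 \<le> T1" by (simp add: T1_def)
    have int: "h integrable_on {t0..T}" by (rule integrable_continuous_real[OF cont])
    have split: "integral {t0..T} h = C + integral {T1..T} h"
      unfolding C_def using Henstock_Kurzweil_Integration.integral_combine[OF t0T1 T1T int] by simp
    have "h integrable_on {T1..T}" by (rule integrable_subinterval_real[OF int]) (use t0T1 in auto)
    hence i2: "(h has_integral integral {T1..T} h) (cbox T1 T)"
      by (simp add: has_integral_integral)
    have "norm (integral {T1..T} h) \<le> e/2 * (T - T1)"
    proof -
      have "\<And>x. x \<in> cbox T1 T \<Longrightarrow> norm (h x) \<le> e/2"
        using T0 nn by (auto simp: T1_def abs_of_nonneg less_imp_le)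
      from has_integral_bound[OF _ i2 this] show ?thesis using e T1T by simp
    qed
    moreover have "e/2 * (T - T1) \<le> e/2 * T" using e t0T1 t00 by (intro mult_left_mono) auto
    moreover have "integral {T1..T} h \<le> norm (integral {T1..T} h)" by simp
    ultimately have "integral {T1..T} h \<le> e/2 * T" by linarith
    hence I: "integral {t0..T} h \<le> C + e/2 * T" using split by simp
    have I0: "integral {t0..T} h \<ge> 0" by (rule integral_nonneg[OF int]) (simp add: nn)
    have "(1/T) * integral {t0..T} h \<le> (1/T) * (C + e/2 * T)"
      using I Tpos by (intro mult_left_mono) auto
    also have "\<dots> = C / T + e/2" using Tpos by (simp add: field_simps)
    also have "C / T < e / 2"
      using TC e Tpos by (simp add: field_simps)
    finally have "(1/T) * integral {t0..T} h < e" by simp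
    moreover have "(1/T) * integral {t0..T} h \<ge> 0" using I0 Tpos by simp
    ultimately show "dist ((1/T) * integral {t0..T} h) 0 < e" by simp
  qed
qed

lemma main_omega:
  fixes A :: "real \<Rightarrow> real^'n^'n" and A0 :: "real^'n^'n" and \<Phi> :: "real \<Rightarrow> real^'n^'n" and t0 :: real
  assumes conv: "(A \<longlongrightarrow> A0) at_top" and st: "asymp_stable A0" and t0: "t0 \<ge> 0"
    and Phi: "\<And>t. t \<ge> t0 \<Longrightarrow> ((\<lambda>s. A s ** \<Phi> s) has_integral (\<Phi> t - mat 1)) {t0..t}"
  shows "((\<lambda>T. (1 / T) * integral {t0..T}
            (\<lambda>t. (mat_norm2 (\<Phi> t - mat_exp ((t - t0) *\<^sub>R A0)))\<^sup>2)) \<longlongrightarrow> 0) at_top"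
proof -
  define \<Psi> where "\<Psi> = (\<lambda>t. mat_exp ((t - t0) *\<^sub>R A0))"
  have I1: "((\<lambda>s. A s ** \<Phi> s) has_integral (\<Phi> t0 - mat 1)) {t0..t0}" by (rule Phi) simp
  have I2: "((\<lambda>s. A s ** \<Phi> s) has_integral 0) {t0..t0}"
    using has_integral_refl(1)[of "\<lambda>s. A s ** \<Phi> s" t0] by (simp add: cbox_interval)
  have "(\<Phi> t0 - mat 1) = 0" using has_integral_unique[OF I1 I2] .
  hence P0: "\<Phi> t0 = mat 1" by simp
  have eqP: "((\<lambda>s. A s ** \<Phi> s) has_integral (\<Phi> t - \<Phi> t0)) {t0..t}" if "t \<ge> t0" for t
    using Phi[OF that] P0 by simp
  have limP: "(\<Phi> \<longlongrightarrow> 0) at_top" by (rule decay_mat[OF st conv eqP])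
  have limS: "(\<Psi> \<longlongrightarrow> 0) at_top" unfolding \<Psi>_def
    by (rule decay_mat[OF st tendsto_const psi_integral])
  have limD: "((\<lambda>t. \<Phi> t - \<Psi> t) \<longlongrightarrow> 0) at_top"
    using tendsto_diff[OF limP limS] by simp
  have limN: "((\<lambda>t. mat_norm2 (\<Phi> t - \<Psi> t)) \<longlongrightarrow> 0) at_top"
  proof (rule tendsto_sandwich[OF _ _ tendsto_const tendsto_l1n[OF limD]])
    show "\<forall>\<^sub>F t in at_top. 0 \<le> mat_norm2 (\<Phi> t - \<Psi> t)" by (simp add: mat_norm2_nonneg)
    show "\<forall>\<^sub>F t in at_top. mat_norm2 (\<Phi> t - \<Psi> t) \<le> l1n (\<Phi> t - \<Psi> t)" by (simp add: mat_norm2_le)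
  qed
  have limH: "((\<lambda>t. (mat_norm2 (\<Phi> t - \<Psi> t))\<^sup>2) \<longlongrightarrow> 0) at_top"
    using tendsto_power[OF limN, of 2] by simp
  have contP: "continuous_on {t0..T} \<Phi>" for T
  proof (cases "t0 \<le> T")
    case True
    have int: "(\<lambda>s. A s ** \<Phi> s) integrable_on {t0..T}" using Phi[OF True] by blast
    have "continuous_on {t0..T} (\<lambda>t. mat 1 + integral {t0..t} (\<lambda>s. A s ** \<Phi> s))"
      by (intro continuous_intros indefinite_integral_continuous_1 int)
    moreover have "\<And>t. t \<in> {t0..T} \<Longrightarrow> mat 1 + integral {t0..t} (\<lambda>s. A s ** \<Phi> s) = \<Phi> t"
    proof -
      fix t assume "t \<in> {t0..T}"
      hence "integral {t0..t} (\<lambda>s. A s ** \<Phi> s) = \<Phi> t - mat 1"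
        using Phi by (intro integral_unique) auto
      thus "mat 1 + integral {t0..t} (\<lambda>s. A s ** \<Phi> s) = \<Phi> t" by simp
    qed
    ultimately show ?thesis by (rule continuous_on_eq)
  next
    case False thus ?thesis by simp
  qed
  have contH: "continuous_on {t0..T} (\<lambda>t. (mat_norm2 (\<Phi> t - \<Psi> t))\<^sup>2)" for T
  proof -
    have "continuous_on {t0..T} (\<lambda>t. \<Phi> t - \<Psi> t)"
      unfolding \<Psi>_def by (intro continuous_intros contP psi_cont)
    hence "continuous_on {t0..T} (\<lambda>t. mat_norm2 (\<Phi> t - \<Psi> t))"
    proof -
      have cg: "continuous_on UNIV (mat_norm2 :: real^'n^'n \<Rightarrow> real)"
        by (rule continuous_at_imp_continuous_on) (auto intro: mat_norm2_isCont)
      assume c: "continuous_on {t0..T} (\<lambda>t. \<Phi> t - \<Psi> t)"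
      show ?thesis using continuous_on_compose2[OF cg c] by simp
    qed
    thus ?thesis by (intro continuous_intros)
  qed
  from cesaro[OF t0 contH _ limH] show ?thesis by (simp add: \<Psi>_def)
qed

theorem lemma3:
  fixes M :: "'a measure"
    and A :: "'a \<Rightarrow> real \<Rightarrow> real^'n^'n"
    and A0 :: "'a \<Rightarrow> real^'n^'n"
    and \<Phi> :: "'a \<Rightarrow> real \<Rightarrow> real^'n^'n"
    and t0 :: real
  assumes "prob_space M"
    and A_rand: "\<And>t. t \<ge> 0 \<Longrightarrow> (\<lambda>\<omega>. A \<omega> t) \<in> borel_measurable M"
    and A_meas: "\<And>\<omega>. \<omega> \<in> space M \<Longrightarrow> A \<omega> \<in> borel_measurable (restrict_space lborel {0..})"
    and A_bdd: "\<And>\<omega>. \<omega> \<in> space M \<Longrightarrow> \<exists>B. \<forall>t\<ge>0. mat_norm2 (A \<omega> t) \<le> B"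
    and A0_rand: "A0 \<in> borel_measurable M"
    and A_conv: "AE \<omega> in M. (A \<omega> \<longlongrightarrow> A0 \<omega>) at_top"
    and A0_stable: "AE \<omega> in M. asymp_stable (A0 \<omega>)"
    and t0: "t0 \<ge> 0"
    and Phi: "\<And>\<omega> t. \<omega> \<in> space M \<Longrightarrow> t \<ge> t0 \<Longrightarrow>
              ((\<lambda>s. A \<omega> s ** \<Phi> \<omega> s) has_integral (\<Phi> \<omega> t - mat 1)) {t0..t}"
  shows "AE \<omega> in M. ((\<lambda>T. (1 / T) * integral {t0..T}
            (\<lambda>t. (mat_norm2 (\<Phi> \<omega> t - mat_exp ((t - t0) *\<^sub>R A0 \<omega>)))\<^sup>2)) \<longlongrightarrow> 0) at_top"
  using A_conv A0_stable AE_space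
proof eventually_elim
  case (elim \<omega>)
  show ?case by (rule main_omega[OF elim(1) elim(2) t0 Phi[OF elim(3)]])
qed

end
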